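(* Let $B$ be a set of memory blocks and $G=(V,E)$ a finite directed multigraph whose edges are labeled with elements of $B$. For any nodes $v_1, v_2 \in V$ and any path $\pi$ in $G$ from $v_1$ to $v_2$, there is a path $\pi'$ from $v_1$ to $v_2$, obtained from $\pi$ by removing sub-paths, such that the set of labels of the edges of $\pi'$ equals the set of labels of the edges of $\pi$, and $\pi'$ has at most $|V|\cdot|B|$ edges (hence, taking $B$ to be the set of labels actually used, at most $|V|\cdot|E|$ edges). *)

theory Defs
  imports Main "HOL-Library.Sublist"
begin

text \<open>A finite directed multigraph G = (V,E) with edge labels: edges are abstract
  objects of type 'e (so parallel edges are allowed), with source, target and label maps.\<close>

definition labeled_multigraph ::
  "'v set \<Rightarrow> 'e set \<Rightarrow> ('e \<Rightarrow> 'v) \<Rightarrow> ('e \<Rightarrow> 'v) \<Rightarrow> ('e \<Rightarrow> 'b) \<Rightarrow> 'b set \<Rightarrow> bool" where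
  "labeled_multigraph V E src tgt lab B \<longleftrightarrow>
     finite V \<and> finite E \<and> (\<forall>e\<in>E. src e \<in> V \<and> tgt e \<in> V \<and> lab e \<in> B)"

definition is_path ::
  "'e set \<Rightarrow> ('e \<Rightarrow> 'v) \<Rightarrow> ('e \<Rightarrow> 'v) \<Rightarrow> 'v \<Rightarrow> 'e list \<Rightarrow> 'v \<Rightarrow> bool" where
  "is_path E src tgt u es w \<longleftrightarrow>
     set es \<subseteq> E \<and>
     (es = [] \<longrightarrow> u = w) \<and>
     (es \<noteq> [] \<longrightarrow> src (hd es) = u \<and> tgt (last es) = w \<and>
        (\<forall>i. Suc i < length es \<longrightarrow> tgt (es ! i) = src (es ! Suc i)))"

end

theory Submission
  imports Defs
begin

fun pth :: "'e set \<Rightarrow> ('e \<Rightarrow> 'v) \<Rightarrow> ('e \<Rightarrow> 'v) \<Rightarrow> 'v \<Rightarrow> 'e list \<Rightarrow> 'v \<Rightarrow> bool" where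
  "pth E src tgt u [] w = (u = w)"
| "pth E src tgt u (e # es) w = (e \<in> E \<and> src e = u \<and> pth E src tgt (tgt e) es w)"

lemma is_path_cons2: "is_path E src tgt u (e # f # fs) w \<longleftrightarrow>
   e \<in> E \<and> src e = u \<and> tgt e = src f \<and> is_path E src tgt (tgt e) (f # fs) w"
proof
  assume a: "is_path E src tgt u (e # f # fs) w"
  have H: "\<forall>i. Suc i < length (e # f # fs) \<longrightarrow> tgt ((e#f#fs) ! i) = src ((e#f#fs) ! Suc i)"
    using a unfolding is_path_def by simp
  have "\<forall>i. Suc i < length (f # fs) \<longrightarrow> tgt ((f#fs) ! i) = src ((f#fs) ! Suc i)"
  proof (intro allI impI)
    fix i assume i: "Suc i < length (f # fs)"
    show "tgt ((f#fs) ! i) = src ((f#fs) ! Suc i)"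
      using H[rule_format, of "Suc i"] i by simp
  qed
  moreover have "tgt e = src f" using H[rule_format, of 0] by simp
  ultimately show "e \<in> E \<and> src e = u \<and> tgt e = src f \<and> is_path E src tgt (tgt e) (f # fs) w"
    using a unfolding is_path_def by simp
next
  assume a: "e \<in> E \<and> src e = u \<and> tgt e = src f \<and> is_path E src tgt (tgt e) (f # fs) w"
  have H2: "\<forall>i. Suc i < length (f # fs) \<longrightarrow> tgt ((f#fs) ! i) = src ((f#fs) ! Suc i)"
    using a unfolding is_path_def by simp
  have "\<forall>i. Suc i < length (e # f # fs) \<longrightarrow> tgt ((e#f#fs) ! i) = src ((e#f#fs) ! Suc i)"
  proof (intro allI impI)
    fix i assume i: "Suc i < length (e # f # fs)"
    show "tgt ((e#f#fs) ! i) = src ((e#f#fs) ! Suc i)"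
    proof (cases i)
      case 0 then show ?thesis using a by simp
    next
      case (Suc j) then show ?thesis using H2[rule_format, of j] i by simp
    qed
  qed
  then show "is_path E src tgt u (e # f # fs) w" using a unfolding is_path_def by simp
qed

lemma is_path_pth: "is_path E src tgt u es w \<longleftrightarrow> pth E src tgt u es w"
proof (induction es arbitrary: u)
  case Nil
  then show ?case by (simp add: is_path_def)
next
  case (Cons e es)
  show ?case
  proof (cases es)
    case Nil
    then show ?thesis by (auto simp: is_path_def)
  next
    case (Cons f fs)
    show ?thesis unfolding Cons is_path_cons2 using Cons.IH[of "tgt e"] Cons by auto
  qed
qed

lemma pth_append: "pth E src tgt u (xs @ ys) w \<longleftrightarrow> (\<exists>m. pth E src tgt u xs m \<and> pth E src tgt m ys w)"
  by (induction xs arbitrary: u) auto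

lemma pth_set: "pth E src tgt u xs w \<Longrightarrow> set xs \<subseteq> E"
  by (induction xs arbitrary: u) auto

lemma simple_path:
  "pth E src tgt x \<beta> y \<Longrightarrow> \<exists>\<beta>'. subseq \<beta>' \<beta> \<and> pth E src tgt x \<beta>' y \<and> distinct (map src \<beta>' @ [y])"
proof (induction \<beta> arbitrary: x)
  case Nil
  then show ?case by auto
next
  case (Cons e \<gamma>)
  then have e: "e \<in> E" "src e = x" "pth E src tgt (tgt e) \<gamma> y" by auto
  from Cons.IH[OF e(3)] obtain \<gamma>' where g: "subseq \<gamma>' \<gamma>" "pth E src tgt (tgt e) \<gamma>' y"
    "distinct (map src \<gamma>' @ [y])" by blast
  show ?case
  proof (cases "x \<in> set (map src \<gamma>' @ [y])")
    case False
    have "subseq (e # \<gamma>') (e # \<gamma>)" using g(1) by simp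
    moreover have "pth E src tgt x (e # \<gamma>') y" using e g by simp
    moreover have "distinct (map src (e # \<gamma>') @ [y])" using False e g by simp
    ultimately show ?thesis by blast
  next
    case True
    show ?thesis
    proof (cases "x \<in> set (map src \<gamma>')")
      case True
      then obtain e' where "e' \<in> set \<gamma>'" "src e' = x" by auto
      then obtain \<delta> \<epsilon> where d: "\<gamma>' = \<delta> @ e' # \<epsilon>" by (meson split_list)
      from g(2) d obtain m where "pth E src tgt m (e' # \<epsilon>) y" by (auto simp: pth_append)
      then have p: "pth E src tgt x (e' # \<epsilon>) y" using \<open>src e' = x\<close> by auto
      have "subseq (e' # \<epsilon>) \<gamma>'" using d by (simp add: list_emb_append2)
      then have "subseq (e' # \<epsilon>) (e # \<gamma>)" using g(1)
        by (meson list_emb_Cons subseq_order.order_trans)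
      moreover have "distinct (map src (e' # \<epsilon>) @ [y])" using g(3) d by auto
      ultimately show ?thesis using p by blast
    next
      case False
      then have "x = y" using True by auto
      then show ?thesis by auto
    qed
  qed
qed

lemma simple_len:
  assumes "pth E src tgt x \<beta> y" "finite V" "\<forall>e\<in>E. src e \<in> V" "y \<in> V"
  shows "\<exists>\<beta>'. subseq \<beta>' \<beta> \<and> pth E src tgt x \<beta>' y \<and> length \<beta>' + 1 \<le> card V"
proof -
  obtain \<beta>' where b: "subseq \<beta>' \<beta>" "pth E src tgt x \<beta>' y" "distinct (map src \<beta>' @ [y])"
    using simple_path[OF assms(1)] by blast
  have "set (map src \<beta>' @ [y]) \<subseteq> V" using pth_set[OF b(2)] assms by auto
  then have "card (set (map src \<beta>' @ [y])) \<le> card V" using assms(2) card_mono by blast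
  then have "length (map src \<beta>' @ [y]) \<le> card V" using distinct_card[OF b(3)] by simp
  then show ?thesis using b by auto
qed

lemma last_new:
  "\<pi> \<noteq> [] \<Longrightarrow> \<exists>\<alpha> e \<beta>. \<pi> = \<alpha> @ e # \<beta> \<and> lab e \<notin> lab ` set \<alpha> \<and> lab ` set \<beta> \<subseteq> lab ` set (\<alpha> @ [e])"
proof (induction \<pi> rule: rev_induct)
  case Nil
  then show ?case by simp
next
  case (snoc x xs)
  show ?case
  proof (cases "lab x \<in> lab ` set xs")
    case False
    then show ?thesis by (rule_tac x=xs in exI, auto)
  next
    case True
    then have "xs \<noteq> []" by auto
    from snoc.IH[OF this] obtain \<alpha> e \<beta> where h: "xs = \<alpha> @ e # \<beta>" "lab e \<notin> lab ` set \<alpha>"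
      "lab ` set \<beta> \<subseteq> lab ` set (\<alpha> @ [e])" by blast
    show ?thesis
      apply (rule exI[of _ \<alpha>], rule exI[of _ e], rule exI[of _ "\<beta> @ [x]"])
      using h True by auto
  qed
qed

lemma main_aux:
  assumes "finite V" "\<forall>e\<in>E. src e \<in> V \<and> tgt e \<in> V"
  shows "card (lab ` set \<pi>) = n \<Longrightarrow> pth E src tgt u \<pi> w \<Longrightarrow>
    \<exists>\<pi>'. subseq \<pi>' \<pi> \<and> pth E src tgt u \<pi>' w \<and> lab ` set \<pi>' = lab ` set \<pi> \<and>
         length \<pi>' \<le> card V * n"
proof (induction n arbitrary: \<pi> w rule: less_induct)
  case (less n)
  show ?case
  proof (cases "\<pi> = []")
    case True
    then show ?thesis using less by auto
  next
    case False
    from last_new[OF this, of lab] obtain \<alpha> e \<beta> where h: "\<pi> = \<alpha> @ e # \<beta>"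
      "lab e \<notin> lab ` set \<alpha>" "lab ` set \<beta> \<subseteq> lab ` set (\<alpha> @ [e])" by blast
    from less.prems(2) h(1) obtain m where p: "pth E src tgt u \<alpha> m" "pth E src tgt m (e # \<beta>) w"
      by (auto simp: pth_append)
    have L: "lab ` set \<pi> = insert (lab e) (lab ` set \<alpha>)" using h by auto
    have cn: "card (lab ` set \<pi>) = Suc (card (lab ` set \<alpha>))" using L h(2) by simp
    then obtain \<alpha>' where a: "subseq \<alpha>' \<alpha>" "pth E src tgt u \<alpha>' m" "lab ` set \<alpha>' = lab ` set \<alpha>"
      "length \<alpha>' \<le> card V * card (lab ` set \<alpha>)"
      using less.IH[OF _ refl p(1)] less.prems(1) by force
    have pe: "e \<in> E" "src e = m" "pth E src tgt (tgt e) \<beta> w" using p(2) by auto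
    have "w \<in> V"
    proof (cases "\<beta> = []")
      case True then show ?thesis using pe assms by auto
    next
      case False
      then obtain \<beta>0 f where "\<beta> = \<beta>0 @ [f]" by (metis rev_exhaust)
      then obtain m' where "pth E src tgt m' [f] w" "f \<in> E" using pe(3) pth_set[OF pe(3)]
        by (auto simp: pth_append)
      then show ?thesis using assms by auto
    qed
    then obtain \<beta>' where b: "subseq \<beta>' \<beta>" "pth E src tgt (tgt e) \<beta>' w" "length \<beta>' + 1 \<le> card V"
      using simple_len[OF pe(3) assms(1)] assms(2) by blast
    have "set \<beta>' \<subseteq> set \<beta>"
    proof
      fix x assume "x \<in> set \<beta>'"
      from list_emb_set[OF b(1) this] show "x \<in> set \<beta>" by auto
    qed
    then have "lab ` set \<beta>' \<subseteq> lab ` set \<beta>" by (rule image_mono)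
    then have sb: "lab ` set \<beta>' \<subseteq> insert (lab e) (lab ` set \<alpha>)" using h(3) by auto
    have A: "lab ` set (\<alpha>' @ e # \<beta>') = insert (lab e) (lab ` set \<alpha> \<union> lab ` set \<beta>')"
      using a(3) by auto
    have lab': "lab ` set (\<alpha>' @ e # \<beta>') = lab ` set \<pi>" unfolding A L using sb by blast
    have sub: "subseq (\<alpha>' @ e # \<beta>') \<pi>" using a(1) b(1) h(1)
      by (simp add: list_emb_append_mono)
    have pp: "pth E src tgt u (\<alpha>' @ e # \<beta>') w" using a(2) pe b(2) by (auto simp: pth_append)
    have "length (\<alpha>' @ e # \<beta>') \<le> card V * card (lab ` set \<alpha>) + card V" using a(4) b(3) by simp
    also have "\<dots> = card V * n" using cn less.prems(1) by simp
    finally show ?thesis using lab' sub pp by blast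
  qed
qed

theorem mainTheorem7:
  fixes V :: "'v set" and E :: "'e set" and src tgt :: "'e \<Rightarrow> 'v"
    and lab :: "'e \<Rightarrow> 'b" and B :: "'b set"
  assumes G: "labeled_multigraph V E src tgt lab B"
    and finB: "finite B"
    and v1: "v1 \<in> V" and v2: "v2 \<in> V"
    and pi: "is_path E src tgt v1 \<pi> v2"
  shows "\<exists>\<pi>'. is_path E src tgt v1 \<pi>' v2 \<and> subseq \<pi>' \<pi> \<and>
              lab ` set \<pi>' = lab ` set \<pi> \<and>
              length \<pi>' \<le> card V * card B \<and>
              length \<pi>' \<le> card V * card E"
proof -
  have g: "finite V" "finite E" "\<forall>e\<in>E. src e \<in> V \<and> tgt e \<in> V \<and> lab e \<in> B"
    using G unfolding labeled_multigraph_def by auto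
  have p: "pth E src tgt v1 \<pi> v2" using pi by (simp add: is_path_pth)
  have sE: "set \<pi> \<subseteq> E" using pth_set[OF p] .
  obtain \<pi>' where r: "subseq \<pi>' \<pi>" "pth E src tgt v1 \<pi>' v2" "lab ` set \<pi>' = lab ` set \<pi>"
    "length \<pi>' \<le> card V * card (lab ` set \<pi>)"
    using main_aux[OF g(1), of E src tgt lab, OF _ refl p] g(3) by blast
  have c1: "card (lab ` set \<pi>) \<le> card B"
    using sE g(3) finB by (intro card_mono) auto
  have "card (lab ` set \<pi>) \<le> card (set \<pi>)" by (rule card_image_le) simp
  also have "\<dots> \<le> card E" using sE g(2) card_mono by blast
  finally have c2: "card (lab ` set \<pi>) \<le> card E" .
  have "length \<pi>' \<le> card V * card B" using r(4) c1 mult_le_mono2 le_trans by blast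
  moreover have "length \<pi>' \<le> card V * card E" using r(4) c2 mult_le_mono2 le_trans by blast
  moreover have "is_path E src tgt v1 \<pi>' v2" using r(2) by (simp add: is_path_pth)
  ultimately show ?thesis using r by blast
qed

end
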